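(* Let $N=2^{L}$ with $L=L_1+L_2$, $L_1,L_2\ge1$, and split the index set $I=\{1,\dots,N\}$ into $n_2=2^{L_2}$ consecutive non-overlapping subintervals $I=\bigcup_{k=1}^{n_2}I_k$, each of length $n_1=2^{L_1}$. Let $\mathbf x_0\in\mathbb R^{n_1}$ have QTT rank $r_0$. For $k=1,\dots,n_2$ define $\mathbf x_k\in\mathbb R^N$ by: the restriction of $\mathbf x_k$ to $I_k$ equals $\mathbf x_0$, and $\mathbf x_k(i)=0$ for $i\in I\setminus I_k$. Let $\mathbf x=\mathbf x_1+\dots+\mathbf x_{n_2}$. Then for every $F\in\mathbb R^N$, $$\operatorname{rank}_{QTT}(F\odot\mathbf x)\le\operatorname{rank}_{QTT}(F)\,r_0.$$
   Context: $\odot$ denotes the entrywise (Hadamard) product of vectors. QTT (quantics tensor train) rank: a vector $\mathbf y\in\mathbb R^{2^m}$ is reshaped into a tensor $Y\in\mathbb R^{2\times\cdots\times2}$ of order $m$ via the binary coding $i-1=\sum_{\ell=1}^m(j_\ell-1)2^{\ell-1}$, $j_\ell\in\{1,2\}$, i.e. $Y(j_1,\dots,j_m)=\mathbf y(i)$. The TT ranks of $Y$ are $r_\ell=\operatorname{rank}$ of the unfolding matrix with rows indexed by $(j_1,\dots,j_\ell)$ and columns by $(j_{\ell+1},\dots,j_m)$, $\ell=1,\dots,m-1$; $\operatorname{rank}_{QTT}(\mathbf y)=\max_\ell r_\ell$. *)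

theory Defs
  imports "Jordan_Normal_Form.DL_Rank"
begin

(* A vector y in R^(2^m) is represented by y :: nat => real, entries y 0 .. y (2^m - 1)
   (0-based: index i of the paper corresponds to y (i-1)); entries beyond 2^m are ignored.
   Binary coding: i-1 = sum (j_l - 1) 2^(l-1), so the first l "bits" (j_1..j_l) are the
   low-order bits. *)

definition qtt_unfolding :: "nat \<Rightarrow> (nat \<Rightarrow> real) \<Rightarrow> nat \<Rightarrow> real mat" where
  "qtt_unfolding m y l = mat (2^l) (2^(m-l)) (\<lambda>(a,b). y (a + 2^l * b))"

definition tt_rank :: "nat \<Rightarrow> (nat \<Rightarrow> real) \<Rightarrow> nat \<Rightarrow> nat" where
  "tt_rank m y l = vec_space.rank (2^l) (qtt_unfolding m y l)"

(* rank_QTT(y) = max_{l=1..m-1} r_l.  For m \<le> 1 there are no interior unfoldings;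
   we then use the rank of the trivial 1 x 2^m unfolding (0 if y = 0, else 1). *)
definition qtt_rank :: "nat \<Rightarrow> (nat \<Rightarrow> real) \<Rightarrow> nat" where
  "qtt_rank m y = (if 2 \<le> m then Max ((tt_rank m y) ` {1..m-1}) else tt_rank m y 0)"

definition hadamard :: "(nat \<Rightarrow> real) \<Rightarrow> (nat \<Rightarrow> real) \<Rightarrow> nat \<Rightarrow> real" (infixl "\<odot>" 70) where
  "hadamard f g = (\<lambda>i. f i * g i)"

(* x_k (k = 0..n2-1, 0-based): copy of x0 on the k-th block of length n1, zero elsewhere *)
definition block_embed :: "nat \<Rightarrow> (nat \<Rightarrow> real) \<Rightarrow> nat \<Rightarrow> nat \<Rightarrow> real" where
  "block_embed n1 x0 k = (\<lambda>i. if k * n1 \<le> i \<and> i < (k+1) * n1 then x0 (i - k * n1) else 0)"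

end

theory Submission
  imports Defs
begin

lemma (in vec_space) dim_span_le_card:
  assumes "finite S" "S \<subseteq> carrier_vec n"
  shows "vectorspace.dim class_ring (span_vs S) \<le> card S"
proof -
  obtain U where U: "maximal U (\<lambda>T. T \<subseteq> S \<and> lin_indpt T)"
    using maximal_exists[of "(\<lambda>T. T \<subseteq> S \<and> lin_indpt T)" "card S" "{}"]
    by (meson assms(1) card_mono empty_iff empty_subsetI finite_lin_indpt2 rev_finite_subset)
  have "U \<subseteq> S" using U by (simp add: maximal_def)
  then show ?thesis using dim_span[OF assms(2,1) U] card_mono[OF assms(1)] by simp
qed

lemma (in vec_space) rank_le_card_span:
  assumes A: "A \<in> carrier_mat n nc" and S: "finite S" "S \<subseteq> carrier_vec n"
    and sub: "set (cols A) \<subseteq> span S"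
  shows "rank A \<le> card S"
proof -
  have vs: "vectorspace class_ring (vs (span S))" using span_is_subspace[THEN subspace_is_vs, of S] S by auto
  have sm: "submodule class_ring (span S) V" using S by (simp add: span_is_submodule)
  have "subspace class_ring (span (set (cols A))) (vs (span S))"
    using vectorspace.span_is_subspace[OF vs, of "set (cols A)", unfolded
    span_li_not_depend(1)[OF sub sm]] sub by auto
  moreover have fin_dim:"vectorspace.fin_dim class_ring (vs (span S))"
       "vectorspace.fin_dim class_ring (vs (span S)\<lparr>carrier := span (set (cols A))\<rparr>)"
    using fin_dim_span fin_dim_span_cols A S by auto
  ultimately have "rank A \<le> vectorspace.dim class_ring (vs (span S))"
    unfolding rank_def using vectorspace.subspace_dim[OF vs] by simp
  then show ?thesis using dim_span_le_card[OF S] by simp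
qed

lemma (in vec_space) rank_span_basis:
  assumes A: "A \<in> carrier_mat n nc"
  shows "\<exists>S. finite S \<and> S \<subseteq> carrier_vec n \<and> card S = rank A \<and> set (cols A) \<subseteq> span S"
proof -
  obtain U where U: "maximal U (\<lambda>T. T \<subseteq> set (cols A) \<and> lin_indpt T)"
    using maximal_exists[of "(\<lambda>T. T \<subseteq> set (cols A) \<and> lin_indpt T)" "card (set (cols A))" "{}"]
    by (meson List.finite_set card_mono empty_iff empty_subsetI finite_lin_indpt2 rev_finite_subset)
  have cc: "set (cols A) \<subseteq> carrier_vec n" using A cols_dim by blast
  have UC: "U \<subseteq> set (cols A)" "lin_indpt U" using U by (auto simp: maximal_def)
  have fU: "finite U" using UC(1) finite_subset by blast
  have "set (cols A) \<subseteq> span U"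
  proof
    fix c assume c: "c \<in> set (cols A)"
    show "c \<in> span U"
    proof (rule ccontr)
      assume nc: "c \<notin> span U"
      have "c \<notin> U" using nc in_own_span[of U] UC cc by blast
      then have "lin_indpt (U \<union> {c})"
        using lin_dep_iff_in_span[of U c] UC cc c nc by blast
      then have "U \<union> {c} = U" using U c UC unfolding maximal_def by blast
      then show False using \<open>c \<notin> U\<close> by blast
    qed
  qed
  then show ?thesis using fU UC cc rank_card_indpt[OF A U] by (intro exI[of _ U]) auto
qed


lemma (in vec_space) rank_cols_subset:
  assumes A: "A \<in> carrier_mat n nc" and B: "B \<in> carrier_mat n nc'"
    and sub: "set (cols A) \<subseteq> set (cols B)"
  shows "rank A \<le> rank B"
proof -
  obtain S where S: "finite S" "S \<subseteq> carrier_vec n" "card S = rank B" "set (cols B) \<subseteq> span S"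
    using rank_span_basis[OF B] by blast
  show ?thesis using rank_le_card_span[OF A S(1,2)] S(3,4) sub by auto
qed

definition hadv :: "nat \<Rightarrow> 'a::field vec \<Rightarrow> 'a vec \<Rightarrow> 'a vec" where
  "hadv n u w = vec n (\<lambda>i. u $ i * w $ i)"

lemma (in vec_space) preimage_submodule:
  assumes N: "submodule class_ring N V"
    and fc: "\<And>v. v \<in> carrier_vec n \<Longrightarrow> f v \<in> carrier_vec n"
    and fadd: "\<And>v w. v \<in> carrier_vec n \<Longrightarrow> w \<in> carrier_vec n \<Longrightarrow> f (v + w) = f v + f w"
    and fsm: "\<And>c v. v \<in> carrier_vec n \<Longrightarrow> f (c \<cdot>\<^sub>v v) = c \<cdot>\<^sub>v f v"
    and f0: "f (0\<^sub>v n) = 0\<^sub>v n"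
  shows "submodule class_ring {v \<in> carrier_vec n. f v \<in> N} V"
proof -
  interpret N: submodule class_ring N V by (rule N)
  show ?thesis
    apply (unfold_locales)
    using fadd fsm f0 N.m_closed N.smult_closed N.zero_closed by auto
qed


lemma (in vec_space) hadv_span:
  fixes S T :: "'a vec set"
  assumes S: "finite S" "S \<subseteq> carrier_vec n" and T: "finite T" "T \<subseteq> carrier_vec n"
    and a: "a \<in> span S" and b: "b \<in> span T"
  shows "hadv n a b \<in> span ((\<lambda>(u,w). hadv n u w) ` (S \<times> T))"
proof -
  let ?P = "(\<lambda>(u,w). hadv n u w) ` (S \<times> T)"
  have Pc: "?P \<subseteq> carrier_vec n" by (auto simp: hadv_def)
  have sP: "submodule class_ring (span ?P) V" using Pc by (simp add: span_is_submodule)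
  have PsP: "?P \<subseteq> span ?P" using Pc in_own_span by simp
  have sub1: "submodule class_ring {v \<in> carrier_vec n. hadv n v w \<in> span ?P} V" for w :: "'a vec"
    by (rule preimage_submodule[OF sP]) (auto simp: hadv_def algebra_simps)
  have sub2: "submodule class_ring {v \<in> carrier_vec n. hadv n u v \<in> span ?P} V" for u :: "'a vec"
    by (rule preimage_submodule[OF sP]) (auto simp: hadv_def algebra_simps)
  have step1: "hadv n v w \<in> span ?P" if v: "v \<in> span S" and w: "w \<in> T" for v w
  proof -
    have "S \<subseteq> {v \<in> carrier_vec n. hadv n v w \<in> span ?P}" using S(2) PsP w by blast
    then have "span S \<subseteq> {v \<in> carrier_vec n. hadv n v w \<in> span ?P}"
      by (rule span_is_subset[OF _ sub1])
    then show ?thesis using v by blast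
  qed
  have "T \<subseteq> {v \<in> carrier_vec n. hadv n a v \<in> span ?P}" using T(2) step1 a by blast
  then have "span T \<subseteq> {v \<in> carrier_vec n. hadv n a v \<in> span ?P}"
    by (rule span_is_subset[OF _ sub2])
  then show ?thesis using b by blast
qed

lemma (in vec_space) rank_hadamard:
  fixes A B :: "'a mat"
  assumes A: "A \<in> carrier_mat n nc" and B: "B \<in> carrier_mat n nc"
  shows "rank (mat n nc (\<lambda>ij. A $$ ij * B $$ ij)) \<le> rank A * rank B"
proof -
  obtain S where S: "finite S" "S \<subseteq> carrier_vec n" "card S = rank A" "set (cols A) \<subseteq> span S"
    using rank_span_basis[OF A] by blast
  obtain T where T: "finite T" "T \<subseteq> carrier_vec n" "card T = rank B" "set (cols B) \<subseteq> span T"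
    using rank_span_basis[OF B] by blast
  let ?P = "(\<lambda>(u,w). hadv n u w) ` (S \<times> T)"
  let ?H = "mat n nc (\<lambda>ij. A $$ ij * B $$ ij)"
  have Pc: "?P \<subseteq> carrier_vec n" by (auto simp: hadv_def)
  have fP: "finite ?P" using S T by simp
  have cP: "card ?P \<le> card S * card T"
    by (metis card_cartesian_product card_image_le finite_cartesian_product S(1) T(1))
  have "set (cols ?H) \<subseteq> span ?P"
  proof
    fix c assume "c \<in> set (cols ?H)"
    then obtain j where j: "j < nc" "c = col ?H j" by (auto simp: in_set_conv_nth)
    have cj: "c = hadv n (col A j) (col B j)"
      using j A B by (auto simp: hadv_def col_def)
    have "col A j \<in> span S" using S(4) j A by (auto simp: cols_def)
    moreover have "col B j \<in> span T" using T(4) j B by (auto simp: cols_def)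
    ultimately show "c \<in> span ?P" unfolding cj using hadv_span[OF S(1,2) T(1,2)] by blast
  qed
  then have "rank ?H \<le> card ?P" by (intro rank_le_card_span[OF _ fP Pc]) auto
  then show ?thesis using cP S(3) T(3) by simp
qed


lemma (in vec_space) rank0_zero:
  assumes A: "A \<in> carrier_mat n nc" and r: "rank A = 0" and i: "i < n" and j: "j < nc"
  shows "A $$ (i,j) = 0"
proof -
  obtain S where S: "finite S" "S \<subseteq> carrier_vec n" "card S = rank A" "set (cols A) \<subseteq> span S"
    using rank_span_basis[OF A] by blast
  then have "S = {}" using r by simp
  then have "span S = {0\<^sub>v n}" using span_empty by simp
  moreover have "col A j \<in> set (cols A)" using A j by (auto simp: cols_def)
  ultimately have "col A j = 0\<^sub>v n" using S(4) by blast
  then show ?thesis using A i j by (metis carrier_matD(1) col_def index_vec index_zero_vec(1))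
qed

lemma xs_eq:
  assumes "i < 2^(L1+L2)"
  shows "(\<Sum>k<2^L2. block_embed (2^L1) x0 k i) = x0 (i mod 2^L1)"
proof -
  have eq: "block_embed (2^L1) x0 k i = (if k = i div 2^L1 then x0 (i mod 2^L1) else 0)" for k
  proof -
    have "(k * 2^L1 \<le> i \<and> i < (k+1) * 2^L1) = (k = i div 2^L1)"
      by (meson div_less_iff_less_mult le_antisym less_add_one
        less_eq_div_iff_mult_less_eq less_inc_imp_less_eq zero_less_power zero_less_numeral)
    moreover have "k = i div 2^L1 \<Longrightarrow> i - k * 2^L1 = i mod 2^L1" by (simp add: minus_div_mult_eq_mod)
    ultimately show ?thesis unfolding block_embed_def by auto
  qed
  have "i div 2^L1 < 2^L2" using assms by (simp add: less_mult_imp_div_less power_add mult.commute)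
  then show ?thesis unfolding eq by simp
qed


lemma unf_carrier: "qtt_unfolding m y l \<in> carrier_mat (2^l) (2^(m-l))"
  by (simp add: qtt_unfolding_def)

lemma mod_split:
  fixes a b l L :: nat
  assumes "a < 2^l" "l \<le> L"
  shows "(a + 2^l * b) mod 2^L = a + 2^l * (b mod 2^(L-l))"
proof -
  have "(2::nat)^L = 2^l * 2^(L-l)" using assms(2) by (simp add: power_add[symmetric])
  then have "(a + 2^l * b) mod 2^L = 2^l * ((a + 2^l * b) div 2^l mod 2^(L-l)) + (a + 2^l * b) mod 2^l"
    by (simp add: mod_mult2_eq)
  also have "(a + 2^l * b) div 2^l = b" using assms(1) by simp
  also have "(a + 2^l * b) mod 2^l = a" using assms(1) by simp
  finally show ?thesis by simp
qed

lemma x0_zero: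
  assumes L1: "L1 \<ge> 1" and r0: "qtt_rank L1 x0 = 0" and i: "i < 2^L1"
  shows "x0 i = 0"
proof -
  define l0 where "l0 = (if 2 \<le> L1 then 1 else (0::nat))"
  have tr: "tt_rank L1 x0 l0 = 0"
  proof (cases "2 \<le> L1")
    case True
    have h: "tt_rank L1 x0 1 \<le> Max ((tt_rank L1 x0) ` {1..L1-1})" using True by (intro Max_ge) auto
    have "Max ((tt_rank L1 x0) ` {1..L1-1}) = 0" using r0 True unfolding qtt_rank_def by simp
    then show ?thesis using h True unfolding l0_def by simp
  next
    case False then show ?thesis using r0 unfolding qtt_rank_def l0_def by simp
  qed
  have l0: "l0 \<le> L1" using L1 unfolding l0_def by auto
  have a: "i mod 2^l0 < 2^l0" by simp
  have "(2::nat)^L1 = 2^l0 * 2^(L1-l0)" using l0 by (simp add: power_add[symmetric])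
  then have b: "i div 2^l0 < 2^(L1-l0)" using i by (simp add: less_mult_imp_div_less mult.commute)
  have "qtt_unfolding L1 x0 l0 $$ (i mod 2^l0, i div 2^l0) = 0"
    by (rule vec_space.rank0_zero[OF unf_carrier tr[unfolded tt_rank_def] a b])
  then show ?thesis using a b by (simp add: qtt_unfolding_def)
qed

lemma level:
  fixes P Q l :: nat and y F xs :: "nat \<Rightarrow> real"
  assumes P: "P \<ge> 1" and Q: "Q \<ge> 1" and l: "1 \<le> l" "l \<le> P + Q - 1"
    and xs: "\<And>i. i < 2^(P+Q) \<Longrightarrow> xs i = y (i mod 2^P)"
  shows "tt_rank (P+Q) (F \<odot> xs) l \<le> tt_rank (P+Q) F l * qtt_rank P y"
proof -
  define m where "m = P + Q"
  define r0 where "r0 = qtt_rank P y"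
  define U where "U = qtt_unfolding m F l"
  define X where "X = qtt_unfolding m xs l"
  have UC: "U \<in> carrier_mat (2^l) (2^(m-l))" and XC: "X \<in> carrier_mat (2^l) (2^(m-l))"
    unfolding U_def X_def by (rule unf_carrier)+
  have "qtt_unfolding m (F \<odot> xs) l = mat (2^l) (2^(m-l)) (\<lambda>ij. U $$ ij * X $$ ij)"
    unfolding U_def X_def qtt_unfolding_def hadamard_def by (rule eq_matI) auto
  then have "tt_rank m (F \<odot> xs) l \<le> tt_rank m F l * vec_space.rank (2^l) X"
    unfolding tt_rank_def using vec_space.rank_hadamard[OF UC XC] U_def by simp
  moreover have idx: "a + 2^l * b < 2^m" if "a < 2^l" "b < 2^(m-l)" for a b :: nat
  proof -
    have "a + 2^l * b < 2^l * (b+1)" using that by simp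
    also have "\<dots> \<le> 2^l * 2^(m-l)" using that by (intro mult_left_mono) auto
    also have "\<dots> = 2^m" using l unfolding m_def by (simp add: power_add[symmetric])
    finally show ?thesis .
  qed
  have "vec_space.rank (2^l) X \<le> r0"
  proof (cases "l < P")
    case True
    define X0 where "X0 = qtt_unfolding P y l"
    have X0C: "X0 \<in> carrier_mat (2^l) (2^(P-l))" unfolding X0_def by (rule unf_carrier)
    have "set (cols X) \<subseteq> set (cols X0)"
    proof
      fix c assume "c \<in> set (cols X)"
      then obtain j where j: "j < 2^(m-l)" "c = col X j" using XC by (auto simp: in_set_conv_nth)
      have jj: "j mod 2^(P-l) < 2^(P-l)" by simp
      have "c = col X0 (j mod 2^(P-l))"
      proof (rule eq_vecI)
        fix a assume "a < dim_vec (col X0 (j mod 2^(P-l)))"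
        then have a: "a < 2^l" using X0C by simp
        show "c $ a = col X0 (j mod 2^(P-l)) $ a"
          using j a jj xs[OF idx[OF a j(1), unfolded m_def]] mod_split[OF a, of P j] True
          by (simp add: X_def X0_def qtt_unfolding_def m_def)
      qed (use j X0C XC in simp)
      then show "c \<in> set (cols X0)" using X0C jj by (auto simp: cols_def)
    qed
    then have "vec_space.rank (2^l) X \<le> vec_space.rank (2^l) X0"
      by (rule vec_space.rank_cols_subset[OF XC X0C])
    also have "\<dots> \<le> r0"
    proof -
      have "2 \<le> P" using True l by simp
      moreover have "tt_rank P y l \<le> Max ((tt_rank P y) ` {1..P-1})"
        using True l by (intro Max_ge) auto
      ultimately show ?thesis unfolding r0_def qtt_rank_def tt_rank_def X0_def by simp
    qed
    finally show ?thesis .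
  next
    case False
    have ent: "X $$ (a,b) = y (a mod 2^P) * 1" if "a < 2^l" "b < 2^(m-l)" for a b
    proof -
      have "(a + 2^l * b) mod 2^P = a mod 2^P"
      proof -
        have "(2::nat)^P dvd 2^l" using False by (simp add: le_imp_power_dvd)
        then have "(2::nat)^P dvd 2^l * b" by simp
        then show ?thesis by (metis add.right_neutral dvd_imp_mod_0 mod_add_right_eq)
      qed
      then show ?thesis using that xs[OF idx[OF that, unfolded m_def]] by (simp add: X_def qtt_unfolding_def)
    qed
    show ?thesis
    proof (cases "r0 = 0")
      case True
      have "X = 0\<^sub>m (2^l) (2^(m-l))"
      proof (rule eq_matI)
        fix a b assume ab: "a < dim_row (0\<^sub>m (2^l) (2^(m-l)) :: real mat)" "b < dim_col (0\<^sub>m (2^l) (2^(m-l)) :: real mat)"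
        then have "a mod 2^P < 2^P" by simp
        then show "X $$ (a,b) = 0\<^sub>m (2^l) (2^(m-l)) $$ (a,b)"
          using ab ent x0_zero[OF P True[unfolded r0_def]] by simp
      qed (use XC in auto)
      moreover have "vec_space.rank (2^l) (0\<^sub>m (2^l) (2^(m-l)) :: real mat) = 0"
        by (rule vec_space.rank_0I)
      ultimately show ?thesis by simp
    next
      case False
      have "vec_space.rank (2^l) X \<le> 1"
        by (rule vec_space.rank_le_1_product_entries[OF XC, of "\<lambda>a. y (a mod 2^P)" "\<lambda>_. 1"])
          (use ent XC in auto)
      then show ?thesis using False by simp
    qed
  qed
  ultimately show ?thesis unfolding m_def r0_def
    by (meson le_trans mult_left_mono zero_le)
qed


theorem lemma4p2:
  fixes L1 L2 :: nat and x0 F :: "nat \<Rightarrow> real" and r0 :: nat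
  assumes "L1 \<ge> 1" and "L2 \<ge> 1"
    and "r0 = qtt_rank L1 x0"
  shows "qtt_rank (L1 + L2)
           (F \<odot> (\<lambda>i. \<Sum>k<2^L2. block_embed (2^L1) x0 k i))
         \<le> qtt_rank (L1 + L2) F * r0"
proof -
  define xs where "xs = (\<lambda>i. \<Sum>k<2^L2. block_embed (2^L1) x0 k i)"
  have xs: "\<And>i. i < 2^(L1+L2) \<Longrightarrow> xs i = x0 (i mod 2^L1)"
    unfolding xs_def by (rule xs_eq)
  have m2: "2 \<le> L1 + L2" using assms by simp
  have lv: "tt_rank (L1+L2) (F \<odot> xs) l \<le> Max (tt_rank (L1+L2) F ` {1..L1+L2-1}) * r0"
    if "l \<in> {1..L1+L2-1}" for l
  proof -
    have "tt_rank (L1+L2) (F \<odot> xs) l \<le> tt_rank (L1+L2) F l * r0"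
      using level[where y=x0 and xs=xs and F=F and l=l and P=L1 and Q=L2] xs that assms by auto
    also have "\<dots> \<le> Max (tt_rank (L1+L2) F ` {1..L1+L2-1}) * r0"
      using that by (intro mult_right_mono Max_ge) auto
    finally show ?thesis .
  qed
  have "Max (tt_rank (L1+L2) (F \<odot> xs) ` {1..L1+L2-1}) \<le> Max (tt_rank (L1+L2) F ` {1..L1+L2-1}) * r0"
    using m2 lv by (subst Max_le_iff) auto
  then show ?thesis using m2 unfolding qtt_rank_def xs_def by simp
qed

end
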